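(* There exists a $\Gamma_2$-equivariant continuous map $f:S(U'_1\oplus U'_1)\to S(U'_2\oplus V'_1)$.
   Context: $\Gamma_2=S^1\rtimes C_2\cong \mathrm{O}(2)$, where $C_2=\langle a\rangle$ and $a t a^{-1}=t^{-1}$ for $t\in S^1$. For $k\in\mathbb{Z}$, $U'_k$ is the real $2$-dimensional orthogonal $\Gamma_2$-representation on $\mathbb{C}\cong\mathbb{R}^2$ with $t\cdot z=t^kz$ for $t\in S^1$ and $a\cdot z=\bar z$. $V'_1$ is the $1$-dimensional real representation on which $S^1$ acts trivially and $a$ acts by $x\mapsto -x$. $S(\cdot)$ denotes the unit sphere. *)

theory Defs
  imports "HOL-Analysis.Analysis"
begin

text \<open>Gamma_2 = S^1 semidirect C_2 = O(2). An element is written t a^e with t a unit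
complex number and e :: bool (e = True means the factor a is present).
Action of t a^e on U'_k (= complex numbers): z \<mapsto> t^k * (a^e z), a z = cnj z.\<close>

definition actU :: "int \<Rightarrow> complex \<Rightarrow> bool \<Rightarrow> complex \<Rightarrow> complex" where
  "actU k t e z = t powi k * (if e then cnj z else z)"

text \<open>Action on V'_1 (= reals): S^1 trivial, a acts by negation.\<close>
definition actV :: "complex \<Rightarrow> bool \<Rightarrow> real \<Rightarrow> real" where
  "actV t e x = (if e then - x else x)"

definition actU1U1 :: "complex \<Rightarrow> bool \<Rightarrow> complex \<times> complex \<Rightarrow> complex \<times> complex" where
  "actU1U1 t e p = (actU 1 t e (fst p), actU 1 t e (snd p))"

definition actU2V1 :: "complex \<Rightarrow> bool \<Rightarrow> complex \<times> real \<Rightarrow> complex \<times> real" where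
  "actU2V1 t e p = (actU 2 t e (fst p), actV t e (snd p))"

end

theory Submission
  imports Defs
begin

definition gg :: "complex \<times> complex \<Rightarrow> complex \<times> real" where
  "gg p = ((fst p)^2 + (snd p)^2, Im (fst p * cnj (snd p)))"

lemma gg_nz:
  assumes "p \<noteq> 0" shows "gg p \<noteq> 0"
proof
  assume h: "gg p = 0"
  obtain z w where p: "p = (z, w)" by fastforce
  have h1: "z^2 + w^2 = 0" and h2: "Im (z * cnj w) = 0"
    using h unfolding gg_def p zero_prod_def by auto
  define r where "r = Re (z * cnj w)"
  have zr: "z * cnj w = complex_of_real r" using h2 unfolding r_def
    by (simp add: complex_eq_iff)
  have zz: "z^2 = - (w^2)" using h1 add_eq_0_iff2 by blast
  have ww: "w * cnj w = complex_of_real ((cmod w)^2)" by (metis complex_norm_square of_real_power)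
  have "(z * cnj w)^2 = z^2 * (cnj w)^2" by (simp add: power_mult_distrib)
  also have "\<dots> = - ((w * cnj w)^2)" using zz by (simp add: power_mult_distrib)
  also have "\<dots> = - complex_of_real (((cmod w)^2)^2)" using ww by simp
  finally have "complex_of_real (r^2) = - complex_of_real (((cmod w)^2)^2)"
    using zr by simp
  then have "r^2 + ((cmod w)^2)^2 = 0" by (metis add_eq_0_iff2 of_real_eq_iff of_real_minus)
  then have "((cmod w)^2)^2 = 0"
    using zero_le_power2[of r] zero_le_power2[of "(cmod w)^2"] by linarith
  then have "cmod w = 0" by simp
  then have w0: "w = 0" by simp
  then have "z = 0" using h1 by simp
  then show False using assms p w0 by (simp add: zero_prod_def)
qed

lemma gg_act:
  assumes "norm t = 1"
  shows "gg (actU1U1 t e p) = actU2V1 t e (gg p)"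
proof -
  have tt: "t * cnj t = 1" using assms
    by (metis complex_norm_square mult.commute norm_one of_real_1 power_one)
  obtain z w where p: "p = (z, w)" by fastforce
  show ?thesis
  proof (cases e)
    case True
    have "Im (t * cnj z * cnj (t * cnj w)) = Im ((t * cnj t) * (cnj z * w))"
      by (simp add: algebra_simps)
    also have "\<dots> = - Im (z * cnj w)" using tt by simp
    finally show ?thesis using True
      by (simp add: gg_def actU1U1_def actU2V1_def actU_def actV_def p power2_eq_square
          algebra_simps)
  next
    case False
    have "Im (t * z * cnj (t * w)) = Im ((t * cnj t) * (z * cnj w))"
      by (simp add: algebra_simps)
    also have "\<dots> = Im (z * cnj w)" using tt by simp
    finally show ?thesis using False
      by (simp add: gg_def actU1U1_def actU2V1_def actU_def actV_def p power2_eq_square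
          algebra_simps)
  qed
qed

lemma act2_norm: "norm t = 1 \<Longrightarrow> norm (actU2V1 t e q) = norm q"
  by (cases q) (auto simp: actU2V1_def actU_def actV_def norm_prod_def norm_mult norm_power)

lemma act2_scale: "actU2V1 t e (c *\<^sub>R q) = c *\<^sub>R actU2V1 t e q"
  by (cases q) (auto simp: actU2V1_def actU_def actV_def scaleR_conv_of_real)

theorem lemma3p3:
  shows "\<exists>f :: complex \<times> complex \<Rightarrow> complex \<times> real.
           continuous_on (sphere 0 1) f \<and>
           f ` sphere 0 1 \<subseteq> sphere 0 1 \<and>
           (\<forall>t e p. norm t = 1 \<longrightarrow> p \<in> sphere 0 1 \<longrightarrow>
               f (actU1U1 t e p) = actU2V1 t e (f p))"
proof (intro exI conjI allI impI)
  let ?f = "\<lambda>p. (1 / norm (gg p)) *\<^sub>R gg p"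
  have cg: "continuous_on UNIV gg" unfolding gg_def
    by (intro continuous_intros)
  have nz: "p \<in> sphere 0 1 \<Longrightarrow> gg p \<noteq> 0" for p :: "complex \<times> complex"
    by (intro gg_nz) auto
  show "continuous_on (sphere 0 1) ?f"
    using nz by (intro continuous_intros continuous_on_subset[OF cg]) auto
  show "?f ` sphere 0 1 \<subseteq> sphere 0 1"
    using nz by auto
  fix t :: complex and e :: bool and p :: "complex \<times> complex"
  assume t: "norm t = 1" and p: "p \<in> sphere 0 1"
  show "?f (actU1U1 t e p) = actU2V1 t e (?f p)"
    using gg_act[OF t] act2_norm[OF t] act2_scale by simp
qed

end
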